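(* Let $\alpha_2\in\mathbb{C}$ and let $(q_1,p_1,q_2,p_2)$ be a solution of the Hamiltonian system $$\frac{dq_1}{dt}=q_1^2+p_2,\quad \frac{dp_1}{dt}=-2q_1p_1+\alpha_2-\frac12,\quad \frac{dq_2}{dt}=-3p_2^2+p_1+\frac t2,\quad \frac{dp_2}{dt}=q_2$$ (Hamiltonian $H=q_1^2p_1+(\frac12-\alpha_2)q_1-p_2^3+\frac t2p_2-\frac{q_2^2}{2}+p_1p_2$). The birational symplectic transformation $$r_1:(Q_1,P_1,Q_2,P_2)=\left(\frac1{q_1},\,-\left(q_1p_1+\frac12-\alpha_2\right)q_1,\,q_2,\,p_2\right)$$ takes this system into the Hamiltonian system $$\frac{dQ_1}{dt}=-Q_1^2P_2-1,\quad \frac{dP_1}{dt}=2Q_1P_1P_2+\left(\frac12-\alpha_2\right)P_2,\quad \frac{dQ_2}{dt}=-3P_2^2+\frac t2-Q_1^2P_1-\left(\frac12-\alpha_2\right)Q_1,\quad \frac{dP_2}{dt}=Q_2,$$ with polynomial Hamiltonian $$\tilde H=-P_1-\frac{Q_2^2}{2}-P_2^3+\frac t2P_2-\left(Q_1P_1+\frac{1-2\alpha_2}{2}\right)Q_1P_2 .$$ *)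

theory Defs
  imports Complex_Main
begin

definition r1_Q1 :: "(complex \<Rightarrow> complex) \<Rightarrow> complex \<Rightarrow> complex" where
  "r1_Q1 q1 = (\<lambda>t. 1 / q1 t)"

definition r1_P1 :: "complex \<Rightarrow> (complex \<Rightarrow> complex) \<Rightarrow> (complex \<Rightarrow> complex) \<Rightarrow> complex \<Rightarrow> complex" where
  "r1_P1 \<alpha>2 q1 p1 = (\<lambda>t. - (q1 t * p1 t + 1/2 - \<alpha>2) * q1 t)"

end

theory Submission
  imports Defs
begin

lemma L1: assumes h: "(q1 has_field_derivative (q1 t ^ 2 + p2 t)) (at t)" and z: "q1 t \<noteq> 0" shows
 "((\<lambda>t. 1 / q1 t) has_field_derivative (- (q1 t ^ 2 + p2 t) / (q1 t)^2)) (at t)"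
  by (rule derivative_eq_intros h z refl)+ (simp add: power2_eq_square)

lemma L2: assumes h1: "(q1 has_field_derivative d1) (at t)" and h2: "(p1 has_field_derivative d2) (at t)"
  shows "((\<lambda>t. - (q1 t * p1 t + 1/2 - a) * q1 t) has_field_derivative
       (- (d1 * p1 t + q1 t * d2)) * q1 t + (- (q1 t * p1 t + 1/2 - a)) * d1) (at (t::complex))"
  by (rule derivative_eq_intros h1 h2 refl)+ (simp add: algebra_simps)

lemma A1: "(q::complex) \<noteq> 0 \<Longrightarrow> - (q ^ 2 + p) / q^2 = - ((1/q) ^ 2 * p) - 1"
  by (simp add: field_simps power2_eq_square)
lemma A2: "(q::complex) \<noteq> 0 \<Longrightarrow> - 3 * p2 ^ 2 + t / 2 - (1/q) ^ 2 * (- (q * p1 + 1/2 - a) * q)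
             - (1/2 - a) * (1/q) = - 3 * p2 ^ 2 + p1 + t / 2"
  by (simp add: field_simps power2_eq_square)
lemma A3: "(q::complex) \<noteq> 0 \<Longrightarrow> - ((q ^ 2 + p2) * p1 + q * (- 2 * q * p1 + a - 1/2)) * q
        + (- (q * p1 + 1/2 - a)) * (q ^ 2 + p2)
      = 2 * (1/q) * (- (q * p1 + 1/2 - a) * q) * p2 + (1/2 - a) * p2"
  by (simp add: field_simps power2_eq_square)

theorem proposition7p1:
  fixes \<alpha>2 :: complex and S :: "complex set"
    and q1 p1 q2 p2 :: "complex \<Rightarrow> complex"
  assumes nz: "\<And>t. t \<in> S \<Longrightarrow> q1 t \<noteq> 0"
    and dq1: "\<And>t. t \<in> S \<Longrightarrow> (q1 has_field_derivative (q1 t ^ 2 + p2 t)) (at t)"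
    and dp1: "\<And>t. t \<in> S \<Longrightarrow> (p1 has_field_derivative (- 2 * q1 t * p1 t + \<alpha>2 - 1/2)) (at t)"
    and dq2: "\<And>t. t \<in> S \<Longrightarrow> (q2 has_field_derivative (- 3 * p2 t ^ 2 + p1 t + t / 2)) (at t)"
    and dp2: "\<And>t. t \<in> S \<Longrightarrow> (p2 has_field_derivative (q2 t)) (at t)"
  shows "\<forall>t\<in>S.
      (r1_Q1 q1 has_field_derivative
          (- ((r1_Q1 q1 t) ^ 2 * p2 t) - 1)) (at t)
    \<and> (r1_P1 \<alpha>2 q1 p1 has_field_derivative
          (2 * r1_Q1 q1 t * r1_P1 \<alpha>2 q1 p1 t * p2 t + (1/2 - \<alpha>2) * p2 t)) (at t)
    \<and> (q2 has_field_derivative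
          (- 3 * p2 t ^ 2 + t / 2 - (r1_Q1 q1 t) ^ 2 * r1_P1 \<alpha>2 q1 p1 t
             - (1/2 - \<alpha>2) * r1_Q1 q1 t)) (at t)
    \<and> (p2 has_field_derivative (q2 t)) (at t)"
proof (intro ballI conjI)
  fix t assume t: "t \<in> S"
  note z = nz[OF t]
  have a0: "(r1_Q1 q1 has_field_derivative (- (q1 t ^ 2 + p2 t) / (q1 t)^2)) (at t)"
    unfolding r1_Q1_def by (rule L1[of q1 t p2, OF dq1[OF t] z])
  show "(r1_Q1 q1 has_field_derivative (- ((r1_Q1 q1 t) ^ 2 * p2 t) - 1)) (at t)"
    using a0 unfolding A1[OF z] by (simp add: r1_Q1_def)
  have b0: "(r1_P1 \<alpha>2 q1 p1 has_field_derivative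
       (- ((q1 t ^ 2 + p2 t) * p1 t + q1 t * (- 2 * q1 t * p1 t + \<alpha>2 - 1/2))) * q1 t
        + (- (q1 t * p1 t + 1/2 - \<alpha>2)) * (q1 t ^ 2 + p2 t)) (at t)"
    unfolding r1_P1_def by (rule L2[OF dq1[OF t] dp1[OF t]])
  show "(r1_P1 \<alpha>2 q1 p1 has_field_derivative
          (2 * r1_Q1 q1 t * r1_P1 \<alpha>2 q1 p1 t * p2 t + (1/2 - \<alpha>2) * p2 t)) (at t)"
    using b0 unfolding A3[OF z] by (simp only: r1_Q1_def r1_P1_def)
  show "(q2 has_field_derivative
          (- 3 * p2 t ^ 2 + t / 2 - (r1_Q1 q1 t) ^ 2 * r1_P1 \<alpha>2 q1 p1 t
             - (1/2 - \<alpha>2) * r1_Q1 q1 t)) (at t)"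
    unfolding r1_Q1_def r1_P1_def A2[OF z] by (rule dq2[OF t])
  show "(p2 has_field_derivative (q2 t)) (at t)" by (rule dp2[OF t])
qed

end
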